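(* Let $\mathbb{K}\in\{\mathbb{R},\mathbb{C}\}$ and $w_1,w_2\in\mathsf{GL}_d(\mathbb{K})$. Then for each $i\in\{1,2\}$, \[\frac{\sigma_1}{\sigma_2}(w_1w_2)\ge\frac{\sigma_d(w_i)^2}{\sigma_1(w_i)^2}\,\frac{\sigma_1}{\sigma_2}(w_1)\,\frac{\sigma_1}{\sigma_2}(w_2).\]
   Context: $\sigma_1(g)\ge\dots\ge\sigma_d(g)$ are the singular values of $g$, and $\frac{\sigma_i}{\sigma_j}(g)=\sigma_i(g)/\sigma_j(g)$. *)

theory Defs
  imports "Jordan_Normal_Form.Schur_Decomposition" "HOL-Computational_Algebra.Polynomial"
begin

text \<open>Singular values of a square matrix A: the square roots of the eigenvalues of
  A^* A (counted with algebraic multiplicity, i.e. the roots of its characteristic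
  polynomial), listed in non-increasing order.  sv A k is the k-th singular value,
  with 1-based index k in 1..dim_row A.\<close>

definition sv_list_real :: "real mat \<Rightarrow> real list" where
  "sv_list_real A = rev (sorted_list_of_multiset
     (image_mset sqrt (proots (char_poly (mat_adjoint A * A)))))"

definition sv_real :: "real mat \<Rightarrow> nat \<Rightarrow> real" where
  "sv_real A k = sv_list_real A ! (k - 1)"

definition sv_list_complex :: "complex mat \<Rightarrow> real list" where
  "sv_list_complex A = rev (sorted_list_of_multiset
     (image_mset (\<lambda>z. sqrt (Re z)) (proots (char_poly (mat_adjoint A * A)))))"

definition sv_complex :: "complex mat \<Rightarrow> nat \<Rightarrow> real" where
  "sv_complex A k = sv_list_complex A ! (k - 1)"

end

theory Submission
  imports Defs
begin

lemma adj_dims[simp]: "dim_row (mat_adjoint A) = dim_col A" "dim_col (mat_adjoint A) = dim_row A"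
  unfolding mat_adjoint_def by auto

lemma adj_carrier[simp]: "A \<in> carrier_mat n m \<Longrightarrow> mat_adjoint A \<in> carrier_mat m n"
  unfolding carrier_mat_def by auto

lemma adj_index[simp]: "i < dim_col A \<Longrightarrow> j < dim_row A \<Longrightarrow>
   mat_adjoint A $$ (i,j) = conjugate (A $$ (j,i))"
  unfolding mat_adjoint_def by (simp add: mat_of_rows_def)

lemma adj_adj[simp]: "mat_adjoint (mat_adjoint (A::complex mat)) = A"
  by (rule eq_matI, auto)

lemma adj_one[simp]: "mat_adjoint (1\<^sub>m n :: complex mat) = 1\<^sub>m n"
  by (rule eq_matI, auto)

lemma adj_mult: fixes A B :: "complex mat"
  assumes "A \<in> carrier_mat n m" "B \<in> carrier_mat m k"
  shows "mat_adjoint (A * B) = mat_adjoint B * mat_adjoint A"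
proof (rule eq_matI)
  fix i j assume i: "i < dim_row (mat_adjoint B * mat_adjoint A)" and j: "j < dim_col (mat_adjoint B * mat_adjoint A)"
  hence i: "i < k" and j: "j < n" using assms by auto
  show "mat_adjoint (A * B) $$ (i, j) = (mat_adjoint B * mat_adjoint A) $$ (i, j)"
    using assms i j by (simp add: scalar_prod_def sum_conjugate mult.commute)
qed (insert assms, auto)

lemma adj_inner: fixes A :: "complex mat"
  assumes A: "A \<in> carrier_mat n m" and x: "x \<in> carrier_vec m" and y: "y \<in> carrier_vec n"
  shows "(A *\<^sub>v x) \<bullet>c y = x \<bullet>c (mat_adjoint A *\<^sub>v y)"
proof -
  have "(A *\<^sub>v x) \<bullet>c y = (\<Sum>i<n. (\<Sum>j<m. A $$ (i,j) * x $ j) * cnj (y $ i))"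
    using assms by (simp add: scalar_prod_def lessThan_atLeast0)
  also have "\<dots> = (\<Sum>i<n. \<Sum>j<m. A $$ (i,j) * x $ j * cnj (y $ i))"
    by (simp add: sum_distrib_right)
  also have "\<dots> = (\<Sum>j<m. \<Sum>i<n. A $$ (i,j) * x $ j * cnj (y $ i))"
    by (rule sum.swap)
  also have "\<dots> = x \<bullet>c (mat_adjoint A *\<^sub>v y)"
    using assms by (simp add: scalar_prod_def lessThan_atLeast0 sum_distrib_left sum_conjugate mult_ac)
  finally show ?thesis .
qed

definition nsq :: "complex vec \<Rightarrow> real" where
  "nsq x = (\<Sum>k<dim_vec x. (cmod (x $ k))\<^sup>2)"

lemma cinner_self: "x \<bullet>c x = complex_of_real (nsq x)"
proof -
  have "x $ i * cnj (x $ i) = complex_of_real ((cmod (x$i))^2)" for i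
    by (rule complex_norm_square[symmetric])
  thus ?thesis unfolding nsq_def scalar_prod_def of_real_sum
    by (simp add: lessThan_atLeast0)
qed

lemma nsq_ge0: "nsq x \<ge> 0" unfolding nsq_def by (auto intro: sum_nonneg)

lemma nsq_pos: "x \<in> carrier_vec n \<Longrightarrow> x \<noteq> 0\<^sub>v n \<Longrightarrow> nsq x > 0"
  using conjugate_square_greater_0_vec[of x n] cinner_self[of x]
  by (simp add: less_complex_def)

lemma nsq_zero: "x \<in> carrier_vec n \<Longrightarrow> nsq x = 0 \<Longrightarrow> x = 0\<^sub>v n"
  using nsq_pos[of x n] by force

lemma unitary_ext:
  fixes v :: "complex vec"
  assumes v: "v \<in> carrier_vec n" and v0: "v \<noteq> 0\<^sub>v n"
  shows "\<exists>W c. W \<in> carrier_mat n n \<and> mat_adjoint W * W = 1\<^sub>m n \<and> col W 0 = c \<cdot>\<^sub>v v"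
proof -
  interpret cof_vec_space n "TYPE(complex)" .
  define b where "b = basis_completion v"
  define ws where "ws = gram_schmidt n b"
  from basis_completion[OF v v0, folded b_def]
  have dist_b: "distinct b" 
    and indep: "\<not> lin_dep (set b)" and b: "set b \<subseteq> carrier_vec n" and hdb: "hd b = v" 
    and len_b: "length b = n" by auto
  have n: "n > 0" using v v0 by (cases n, auto)
  from hdb len_b n obtain vs where bv: "b = v # vs" by (cases b, auto)
  from gram_schmidt_result[OF b dist_b indep refl, folded ws_def]
  have ws: "set ws \<subseteq> carrier_vec n" "corthogonal ws" "length ws = n" 
    by (auto simp: len_b)
  from gram_schmidt_hd[OF v, of vs, folded bv] have hdws: "hd ws = v" unfolding ws_def .
  define c where "c = (\<lambda>w. complex_of_real (1 / sqrt (nsq w)))"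
  define ws' where "ws' = map (\<lambda>w. c w \<cdot>\<^sub>v w) ws"
  define W where "W = mat_of_cols n ws'"
  have ws'c: "set ws' \<subseteq> carrier_vec n" using ws unfolding ws'_def by auto
  have W: "W \<in> carrier_mat n n" unfolding W_def using ws ws'c by (auto simp: ws'_def)
  have wsi: "i < n \<Longrightarrow> ws ! i \<in> carrier_vec n" for i using ws by auto
  have npos: "i < n \<Longrightarrow> nsq (ws ! i) > 0" for i
  proof -
    assume i: "i < n"
    have "ws ! i \<bullet>c ws ! i \<noteq> 0" using corthogonalD[OF ws(2), of i i] ws i by auto
    thus ?thesis using nsq_ge0[of "ws ! i"] cinner_self[of "ws ! i"] by (auto simp: less_le)
  qed
  have "mat_adjoint W * W = 1\<^sub>m n"
  proof (rule eq_matI)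
    fix i j assume "i < dim_row (1\<^sub>m n)" "j < dim_col (1\<^sub>m n)"
    hence i: "i < n" and j: "j < n" by auto
    have "(mat_adjoint W * W) $$ (i,j) = (\<Sum>k<n. cnj (ws' ! i $ k) * ws' ! j $ k)"
      using W i j ws'c ws by (simp add: scalar_prod_def lessThan_atLeast0 W_def ws'_def mat_of_cols_def)
    also have "\<dots> = cnj (c (ws ! i)) * c (ws ! j) * (ws ! j \<bullet>c ws ! i)"
      using i j ws wsi[OF i] wsi[OF j]
      by (simp add: ws'_def scalar_prod_def lessThan_atLeast0 sum_distrib_left mult_ac)
    also have "\<dots> = 1\<^sub>m n $$ (i,j)"
    proof (cases "i = j")
      case True
      have "cnj (c (ws ! i)) * c (ws ! i) * (ws ! i \<bullet>c ws ! i) = 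
        complex_of_real ((1 / sqrt (nsq (ws ! i)))\<^sup>2 * nsq (ws ! i))"
        unfolding c_def cinner_self by (metis complex_cnj_complex_of_real of_real_mult power2_eq_square)
      also have "\<dots> = 1"
      proof -
        have r: "(1 / sqrt (nsq (ws ! i)))\<^sup>2 * nsq (ws ! i) = 1" using npos[OF i] by (simp add: power_divide)
        show ?thesis unfolding r by simp
      qed
      finally show ?thesis using True i by simp
    next
      case False
      thus ?thesis using corthogonalD[OF ws(2), of j i] ws i j by auto
    qed
    finally show "(mat_adjoint W * W) $$ (i,j) = 1\<^sub>m n $$ (i,j)" .
  qed (insert W, auto)
  moreover have "col W 0 = c v \<cdot>\<^sub>v v"
    unfolding W_def using n ws'c ws hdws
    by (subst col_mat_of_cols, auto simp: ws'_def hd_conv_nth[symmetric])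
  ultimately show ?thesis using W by blast
qed

definition diagm :: "complex list \<Rightarrow> complex mat" where
  "diagm es = mat (length es) (length es) (\<lambda>(i,j). if i = j then es ! i else 0)"

lemma adj_block: fixes U :: "complex mat" assumes U: "U \<in> carrier_mat m m"
  shows "mat_adjoint (four_block_mat (1\<^sub>m 1) (0\<^sub>m 1 m) (0\<^sub>m m 1) U) = 
    four_block_mat (1\<^sub>m 1) (0\<^sub>m 1 m) (0\<^sub>m m 1) (mat_adjoint U)"
  by (rule eq_matI, insert U, auto)

lemma spectral:
  fixes H :: "complex mat"
  assumes "H \<in> carrier_mat n n" "mat_adjoint H = H" "char_poly H = (\<Prod>e\<leftarrow>es. [:-e,1:])"
  shows "\<exists>U. U \<in> carrier_mat n n \<and> mat_adjoint U * U = 1\<^sub>m n \<and> mat_adjoint U * H * U = diagm es"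
  using assms
proof (induct es arbitrary: n H)
  case Nil
  from degree_monic_char_poly[OF Nil(1)] Nil(3) have n: "n = 0" by auto
  show ?case using Nil(1) n
    by (intro exI[of _ "1\<^sub>m 0"], auto intro!: eq_matI simp: diagm_def)
next
  case (Cons e es n H)
  note H = Cons(2) note herm = Cons(3)
  have "eigenvalue H e" unfolding eigenvalue_root_char_poly[OF H] Cons(4) by simp
  then obtain v where ev: "eigenvector H v e" unfolding eigenvalue_def by auto
  hence v: "v \<in> carrier_vec n" and v0: "v \<noteq> 0\<^sub>v n" and Hv: "H *\<^sub>v v = e \<cdot>\<^sub>v v"
    unfolding eigenvector_def using H by auto
  from unitary_ext[OF v v0] obtain W c where W: "W \<in> carrier_mat n n" 
    and WW: "mat_adjoint W * W = 1\<^sub>m n" and Wc: "col W 0 = c \<cdot>\<^sub>v v" by auto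
  have "n \<noteq> 0" using v v0 by (cases n, auto)
  then obtain n1 where n: "n = Suc n1" by (cases n, auto)
  have W'W: "W * mat_adjoint W = 1\<^sub>m n" 
    by (rule mat_mult_left_right_inverse[OF _ W WW], insert W, auto)
  define A' where "A' = mat_adjoint W * H * W"
  have A': "A' \<in> carrier_mat n n" unfolding A'_def using W H by auto
  have A'h: "mat_adjoint A' = A'"
  proof -
    have "mat_adjoint A' = mat_adjoint W * mat_adjoint (mat_adjoint W * H)"
      unfolding A'_def by (rule adj_mult[of _ n n _ n], insert W H, auto)
    also have "mat_adjoint (mat_adjoint W * H) = H * W"
      using adj_mult[of "mat_adjoint W" n n H n] W H herm by simp
    finally show ?thesis unfolding A'_def using W H by (simp add: assoc_mult_mat[of _ n n _ n _ n])
  qed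
  have HWc: "H *\<^sub>v col W 0 = e \<cdot>\<^sub>v col W 0" unfolding Wc
    using H v Hv by (simp add: mult_mat_vec smult_smult_assoc mult.commute)
  have col0: "A' $$ (i,0) = (if i = 0 then e else 0)" if i: "i < n" for i
  proof -
    have "A' $$ (i,0) = (mat_adjoint W * (H * W)) $$ (i,0)" unfolding A'_def
      using W H by (simp add: assoc_mult_mat[of _ n n _ n _ n])
    also have "\<dots> = row (mat_adjoint W) i \<bullet> col (H * W) 0"
      using W H i n by simp
    also have "\<dots> = row (mat_adjoint W) i \<bullet> (H *\<^sub>v col W 0)"
      using col_mult2[OF H W, of 0] n by simp
    also have "\<dots> = e * (row (mat_adjoint W) i \<bullet> col W 0)"
      unfolding HWc using W i n by simp
    also have "row (mat_adjoint W) i \<bullet> col W 0 = (mat_adjoint W * W) $$ (i,0)"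
      using W i n by simp
    also have "\<dots> = (if i = 0 then 1 else 0)" unfolding WW using i n by simp
    finally show ?thesis by simp
  qed
  have row0: "A' $$ (0,j) = cnj (A' $$ (j,0))" if j: "j < n" for j
    using arg_cong[OF A'h, of "\<lambda>M. M $$ (0,j)"] A' j n by simp
  have ereal: "cnj e = e" using row0[of 0] col0[of 0] n by simp
  define A3 where "A3 = mat n1 n1 (\<lambda>(i,j). A' $$ (Suc i, Suc j))"
  have A3: "A3 \<in> carrier_mat n1 n1" unfolding A3_def by simp
  have A'b: "A' = four_block_mat (mat 1 1 (\<lambda>_. e)) (0\<^sub>m 1 n1) (0\<^sub>m n1 1) A3"
    by (rule eq_matI, insert A' n col0 row0 ereal, auto simp: A3_def)
  have sim: "similar_mat A' H" unfolding similar_mat_def similar_mat_wit_def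
    by (intro exI[of _ "mat_adjoint W"] exI[of _ W] exI[of _ n], insert W H WW W'W, auto simp: A'_def)
  have "char_poly A' = char_poly (mat 1 1 (\<lambda>_. e)) * char_poly A3"
    unfolding A'b by (rule char_poly_four_block_zeros_col, insert A3, auto)
  also have "char_poly (mat 1 1 (\<lambda>_. e)) = [: -e,1 :]"
    by (simp add: char_poly_defs det_def sign_def)
  finally have "[: -e,1 :] * char_poly A3 = [: -e,1 :] * (\<Prod>e\<leftarrow>es. [:-e,1:])"
    using char_poly_similar[OF sim] Cons(4) by simp
  hence cp3: "char_poly A3 = (\<Prod>e\<leftarrow>es. [:-e,1:])"
    by (metis mult_cancel_left pCons_eq_0_iff zero_neq_one)
  have A3h: "mat_adjoint A3 = A3"
  proof (rule eq_matI)
    fix i j assume "i < dim_row A3" "j < dim_col A3"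
    thus "mat_adjoint A3 $$ (i,j) = A3 $$ (i,j)"
      using arg_cong[OF A'h, of "\<lambda>M. M $$ (Suc i,Suc j)"] A' n A3 by (auto simp: A3_def)
  qed (insert A3, auto)
  from Cons(1)[OF A3 A3h cp3] obtain U3 where U3: "U3 \<in> carrier_mat n1 n1"
    and UU3: "mat_adjoint U3 * U3 = 1\<^sub>m n1" and D3: "mat_adjoint U3 * A3 * U3 = diagm es" by auto
  define V where "V = four_block_mat (1\<^sub>m 1) (0\<^sub>m 1 n1) (0\<^sub>m n1 1) U3"
  have V: "V \<in> carrier_mat n n" unfolding V_def n using U3 by auto
  have Vadj: "mat_adjoint V = four_block_mat (1\<^sub>m 1) (0\<^sub>m 1 n1) (0\<^sub>m n1 1) (mat_adjoint U3)"
    unfolding V_def by (rule adj_block[OF U3])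
  have VV: "mat_adjoint V * V = 1\<^sub>m n" unfolding Vadj unfolding V_def
    by (subst mult_four_block_mat, insert U3, auto simp: UU3 n)
  define U where "U = W * V"
  have U: "U \<in> carrier_mat n n" unfolding U_def using W V by auto
  have Uadj: "mat_adjoint U = mat_adjoint V * mat_adjoint W" unfolding U_def
    by (rule adj_mult[OF W V])
  have aW: "mat_adjoint W \<in> carrier_mat n n" "mat_adjoint V \<in> carrier_mat n n" using W V by auto
  have "mat_adjoint U * U = mat_adjoint V * (mat_adjoint W * (W * V))"
    unfolding Uadj unfolding U_def using V W aW by (simp add: assoc_mult_mat[of _ n n _ n _ n])
  also have "mat_adjoint W * (W * V) = (mat_adjoint W * W) * V"
    using assoc_mult_mat[OF aW(1) W V] by simp
  also have "\<dots> = V" unfolding WW using V by simp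
  finally have UU: "mat_adjoint U * U = 1\<^sub>m n" using VV by simp
  have "mat_adjoint U * H * U = mat_adjoint V * A' * V"
    unfolding Uadj unfolding U_def A'_def using V W H by (simp add: assoc_mult_mat[of _ n n _ n _ n] mult_carrier_mat[of _ n n _ n])
  also have "\<dots> = four_block_mat (mat 1 1 (\<lambda>_. e)) (0\<^sub>m 1 n1) (0\<^sub>m n1 1) (mat_adjoint U3 * A3 * U3)"
    unfolding Vadj unfolding A'b V_def
    apply (subst mult_four_block_mat, insert U3 A3, auto)
    apply (subst mult_four_block_mat, insert U3 A3, auto)
    apply (subst left_add_zero_mat[of _ n1 n1], rule mult_carrier_mat[of _ n1 n1], auto)
    apply (subst left_add_zero_mat[of _ n1 n1], auto)
    done
  also have "\<dots> = diagm (e # es)"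
  proof -
    have les: "length es = n1" using arg_cong[OF D3, of dim_row] U3 by (simp add: diagm_def)
    show ?thesis unfolding D3 by (rule eq_matI, auto simp: diagm_def n nth_Cons' les)
  qed
  finally show ?case using U UU by blast
qed

lemma proots_linprod: "proots (\<Prod>e\<leftarrow>es. [:-e,1:]) = mset (es :: 'a :: idom list)"
proof (induct es)
  case (Cons e es)
  have "(\<Prod>e\<leftarrow>es. [:-e,1:]) \<noteq> 0" by (auto simp: prod_list_zero_iff)
  have "(\<Prod>e\<leftarrow>e#es. [:-e,1:]) = [:-e,1:] * (\<Prod>e\<leftarrow>es. [:-e,1:])"
    by (simp only: list.map prod_list.Cons)
  also have "proots \<dots> = proots [:-e,1:] + proots (\<Prod>e\<leftarrow>es. [:-e,1:])"
    by (rule proots_mult, simp, fact)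
  finally show ?case using Cons by (simp add: proots_linear_factor)
qed simp

lemma prod_list_mset_cong: fixes f :: "'a \<Rightarrow> 'b :: comm_monoid_mult" shows "mset xs = mset ys \<Longrightarrow> prod_list (map f xs) = prod_list (map f ys)"
proof -
  assume "mset xs = mset ys"
  hence "mset (map f xs) = mset (map f ys)" by simp
  thus ?thesis by (metis prod_mset_prod_list)
qed

lemma herm_AA: fixes A :: "complex mat" assumes A: "A \<in> carrier_mat d d"
  shows "mat_adjoint (mat_adjoint A * A) = mat_adjoint A * A"
  using adj_mult[of "mat_adjoint A" d d A d] A by simp

lemma quad_AA: fixes A :: "complex mat" assumes A: "A \<in> carrier_mat d d" and x: "x \<in> carrier_vec d"
  shows "((mat_adjoint A * A) *\<^sub>v x) \<bullet>c x = complex_of_real (nsq (A *\<^sub>v x))"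
proof -
  have "((mat_adjoint A * A) *\<^sub>v x) \<bullet>c x = (mat_adjoint A *\<^sub>v (A *\<^sub>v x)) \<bullet>c x"
    by (subst assoc_mult_mat_vec[of _ d d _ d], insert A x, auto)
  also have "\<dots> = (A *\<^sub>v x) \<bullet>c (A *\<^sub>v x)"
    using adj_inner[of "mat_adjoint A" d d "A *\<^sub>v x" x] A x by simp
  finally show ?thesis by (simp add: cinner_self)
qed

lemma sv_struct:
  fixes A :: "complex mat" assumes A: "A \<in> carrier_mat d d"
  shows "\<exists>U rs. U \<in> carrier_mat d d \<and> mat_adjoint U * U = 1\<^sub>m d \<and> U * mat_adjoint U = 1\<^sub>m d
    \<and> length rs = d \<and> sorted (rev rs) \<and> (\<forall>r\<in>set rs. r \<ge> 0)
    \<and> mat_adjoint U * (mat_adjoint A * A) * U = diagm (map of_real rs)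
    \<and> char_poly (mat_adjoint A * A) = (\<Prod>e\<leftarrow>map of_real rs. [:-e,1:])
    \<and> sv_list_complex A = map sqrt rs"
proof -
  define H where "H = mat_adjoint A * A"
  have H: "H \<in> carrier_mat d d" unfolding H_def using A by auto
  have Hh: "mat_adjoint H = H" unfolding H_def by (rule herm_AA[OF A])
  obtain as where fta: "smult (lead_coeff (char_poly H)) (\<Prod>a\<leftarrow>as. [:- a, 1:]) = char_poly H"
    and las: "length as = degree (char_poly H)"
    using fundamental_theorem_algebra_factorized by blast
  from degree_monic_char_poly[OF H] fta las
  have cp: "char_poly H = (\<Prod>a\<leftarrow>as. [:- a, 1:])" and las: "length as = d" by auto
  have real: "a = complex_of_real (Re a) \<and> Re a \<ge> 0" if a: "a \<in> set as" for a
  proof -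
    have "eigenvalue H a" unfolding eigenvalue_root_char_poly[OF H] cp
      using linear_poly_root[OF a] .
    then obtain v where ev: "eigenvector H v a" unfolding eigenvalue_def by auto
    hence v: "v \<in> carrier_vec d" and v0: "v \<noteq> 0\<^sub>v d" and Hv: "H *\<^sub>v v = a \<cdot>\<^sub>v v"
      unfolding eigenvector_def using H by auto
    have "(H *\<^sub>v v) \<bullet>c v = a * (v \<bullet>c v)" unfolding Hv using v by simp
    also have "(H *\<^sub>v v) \<bullet>c v = complex_of_real (nsq (A *\<^sub>v v))"
      unfolding H_def by (rule quad_AA[OF A v])
    finally have eq: "complex_of_real (nsq (A *\<^sub>v v)) = a * complex_of_real (nsq v)"
      by (simp add: cinner_self)
    have pos: "nsq v > 0" by (rule nsq_pos[OF v v0])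
    hence "a = complex_of_real (nsq (A *\<^sub>v v) / nsq v)" using eq
      by (simp add: field_simps)
    thus ?thesis using nsq_ge0[of "A *\<^sub>v v"] pos by simp
  qed
  define rs where "rs = rev (sort (map Re as))"
  have as_eq: "as = map complex_of_real (map Re as)"
  proof -
    have "(complex_of_real \<circ> Re) a = a" if "a \<in> set as" for a
      by (metis comp_apply real[OF that])
    thus ?thesis unfolding map_map by (metis map_idI)
  qed
  have mset_rs: "mset rs = mset (map Re as)" unfolding rs_def by simp
  have cp2: "char_poly H = (\<Prod>e\<leftarrow>map of_real rs. [:-e,1:])"
  proof -
    have "char_poly H = (\<Prod>a\<leftarrow>map complex_of_real (map Re as). [:- a, 1:])"
      by (subst as_eq[symmetric], rule cp)
    also have "\<dots> = (\<Prod>e\<leftarrow>map of_real rs. [:-e,1:])"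
      by (rule prod_list_mset_cong) (metis mset_map mset_rs)
    finally show ?thesis .
  qed
  from spectral[OF H Hh cp2] obtain U where U: "U \<in> carrier_mat d d" and UU: "mat_adjoint U * U = 1\<^sub>m d"
    and D: "mat_adjoint U * H * U = diagm (map of_real rs)" by auto
  have UU': "U * mat_adjoint U = 1\<^sub>m d"
    by (rule mat_mult_left_right_inverse[OF _ U UU], insert U, auto)
  have lrs: "length rs = d" unfolding rs_def using las by simp
  have srt: "sorted (rev rs)" unfolding rs_def by simp
  have "\<forall>a\<in>set as. Re a \<ge> 0" using real by blast
  hence nonneg: "\<forall>r\<in>set rs. r \<ge> 0" unfolding rs_def by auto
  have sv: "sv_list_complex A = map sqrt rs"
  proof -
    have "image_mset (\<lambda>z. sqrt (Re z)) (proots (char_poly H)) = mset (map sqrt rs)"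
      unfolding cp2 proots_linprod by (simp add: mset_map multiset.map_comp comp_def)
    moreover have "sort (map sqrt rs) = rev (map sqrt rs)"
    proof (rule properties_for_sort)
      show "sorted (rev (map sqrt rs))" using srt unfolding rev_map sorted_map
        by (rule sorted_wrt_mono_rel[rotated], auto)
    qed simp
    ultimately show ?thesis unfolding sv_list_complex_def H_def[symmetric]
      by (metis mset_map sorted_list_of_multiset_mset rev_rev_ident)
  qed
  show ?thesis unfolding H_def[symmetric]
    by (intro exI[of _ U] exI[of _ rs] conjI U UU UU' lrs srt nonneg D cp2 sv)
qed

lemma adj_inner2: fixes A :: "complex mat"
  assumes A: "A \<in> carrier_mat n m" and x: "x \<in> carrier_vec n" and y: "y \<in> carrier_vec m"
  shows "x \<bullet>c (A *\<^sub>v y) = (mat_adjoint A *\<^sub>v x) \<bullet>c y"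
proof -
  have "x \<bullet>c (A *\<^sub>v y) = (\<Sum>i<n. x $ i * cnj (\<Sum>j<m. A $$ (i,j) * y $ j))"
    using assms by (simp add: scalar_prod_def lessThan_atLeast0)
  also have "\<dots> = (\<Sum>i<n. \<Sum>j<m. x $ i * cnj (A $$ (i,j)) * cnj (y $ j))"
    by (simp add: sum_distrib_left mult_ac)
  also have "\<dots> = (\<Sum>j<m. \<Sum>i<n. x $ i * cnj (A $$ (i,j)) * cnj (y $ j))"
    by (rule sum.swap)
  also have "\<dots> = (mat_adjoint A *\<^sub>v x) \<bullet>c y"
    using assms by (simp add: scalar_prod_def lessThan_atLeast0 sum_distrib_right sum_distrib_left mult_ac)
  finally show ?thesis .
qed

lemma if_mult0: "(if P then a else (0::'a::mult_zero)) * b = (if P then a*b else 0)" by simp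

lemma diag_quad: fixes y :: "complex vec" assumes y: "y \<in> carrier_vec d" and lrs: "length rs = d"
  shows "(diagm (map of_real rs) *\<^sub>v y) \<bullet>c y = complex_of_real (\<Sum>i<d. rs ! i * (cmod (y $ i))\<^sup>2)"
proof -
  have "(diagm (map of_real rs) *\<^sub>v y) \<bullet>c y = (\<Sum>i<d. complex_of_real (rs ! i) * (y $ i * cnj (y $ i)))"
  proof -
    have "(diagm (map of_real rs) *\<^sub>v y) $ i = complex_of_real (rs ! i) * y $ i" if i: "i < d" for i
      using i y lrs by (simp add: diagm_def scalar_prod_def lessThan_atLeast0 row_def if_mult0 cong: if_cong)
    thus ?thesis using y lrs by (simp add: scalar_prod_def lessThan_atLeast0 diagm_def mult_ac)
  qed
  also have "\<dots> = complex_of_real (\<Sum>i<d. rs ! i * (cmod (y $ i))\<^sup>2)"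
    unfolding of_real_sum
  proof (rule sum.cong[OF refl])
    fix i
    have "y $ i * cnj (y $ i) = complex_of_real ((cmod (y $ i))\<^sup>2)" by (rule complex_norm_square[symmetric])
    thus "complex_of_real (rs ! i) * (y $ i * cnj (y $ i)) = complex_of_real (rs ! i * (cmod (y $ i))\<^sup>2)"
      by (simp only: of_real_mult)
  qed
  finally show ?thesis .
qed

lemma rayleigh:
  fixes A U :: "complex mat"
  assumes A: "A \<in> carrier_mat d d" and U: "U \<in> carrier_mat d d"
    and UU: "mat_adjoint U * U = 1\<^sub>m d" and UU': "U * mat_adjoint U = 1\<^sub>m d"
    and D: "mat_adjoint U * (mat_adjoint A * A) * U = diagm (map of_real rs)"
    and lrs: "length rs = d" and x: "x \<in> carrier_vec d"
  shows "nsq (A *\<^sub>v x) = (\<Sum>i<d. rs ! i * (cmod ((mat_adjoint U *\<^sub>v x) $ i))\<^sup>2)"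
    and "nsq x = (\<Sum>i<d. (cmod ((mat_adjoint U *\<^sub>v x) $ i))\<^sup>2)"
proof -
  define H where "H = mat_adjoint A * A"
  define y where "y = mat_adjoint U *\<^sub>v x"
  have H: "H \<in> carrier_mat d d" unfolding H_def using A by auto
  have aU: "mat_adjoint U \<in> carrier_mat d d" using U by auto
  have y: "y \<in> carrier_vec d" unfolding y_def using U x unfolding carrier_vec_def carrier_mat_def by simp
  have xUy: "x = U *\<^sub>v y" unfolding y_def
    using assoc_mult_mat_vec[OF U aU x] UU' x by simp
  have "complex_of_real (nsq (A *\<^sub>v x)) = (H *\<^sub>v x) \<bullet>c x"
    unfolding H_def by (rule quad_AA[OF A x, symmetric])
  also have "\<dots> = (H *\<^sub>v x) \<bullet>c (U *\<^sub>v y)" using xUy by simp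
  also have "\<dots> = (mat_adjoint U *\<^sub>v (H *\<^sub>v x)) \<bullet>c y"
    by (rule adj_inner2[OF U _ y], insert H x, auto)
  also have "mat_adjoint U *\<^sub>v (H *\<^sub>v x) = (mat_adjoint U * H * U) *\<^sub>v y"
    unfolding xUy using aU H U y
    by (simp add: assoc_mult_mat_vec[of _ d d _ d] mult_carrier_mat[of _ d d _ d])
  also have "mat_adjoint U * H * U = diagm (map of_real rs)" unfolding H_def by (rule D)
  also have "(diagm (map of_real rs) *\<^sub>v y) \<bullet>c y = complex_of_real (\<Sum>i<d. rs ! i * (cmod (y $ i))\<^sup>2)"
    by (rule diag_quad[OF y lrs])
  finally have eq: "complex_of_real (nsq (A *\<^sub>v x)) = complex_of_real (\<Sum>i<d. rs ! i * (cmod (y $ i))\<^sup>2)" .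
  show "nsq (A *\<^sub>v x) = (\<Sum>i<d. rs ! i * (cmod ((mat_adjoint U *\<^sub>v x) $ i))\<^sup>2)"
    using eq unfolding y_def of_real_eq_iff .
  have "complex_of_real (nsq x) = (U *\<^sub>v y) \<bullet>c (U *\<^sub>v y)" unfolding cinner_self[symmetric] using xUy by simp
  also have "\<dots> = y \<bullet>c (mat_adjoint U *\<^sub>v (U *\<^sub>v y))"
    by (rule adj_inner[OF U y], insert U y, auto)
  also have "mat_adjoint U *\<^sub>v (U *\<^sub>v y) = y"
    using assoc_mult_mat_vec[OF aU U y, symmetric] UU y by simp
  finally show "nsq x = (\<Sum>i<d. (cmod ((mat_adjoint U *\<^sub>v x) $ i))\<^sup>2)"
  proof -
    assume "complex_of_real (nsq x) = y \<bullet>c y"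
    hence "nsq x = nsq y" unfolding cinner_self of_real_eq_iff .
    thus ?thesis using y unfolding y_def[symmetric] nsq_def by simp
  qed
qed

lemma conj_unit: "conjugate (unit_vec n i :: complex vec) = unit_vec n i"
  by (rule eq_vecI, auto simp: unit_vec_def)

lemma nsq_zero_vec: "nsq (0\<^sub>v n) = 0" unfolding nsq_def by simp

lemma sv_facts:
  fixes A :: "complex mat" assumes A: "A \<in> carrier_mat d d" and d2: "d \<ge> 2"
  shows "\<exists>rs. length rs = d \<and> sorted (rev rs) \<and> (\<forall>r\<in>set rs. r \<ge> 0) \<and> sv_list_complex A = map sqrt rs
   \<and> (\<forall>x\<in>carrier_vec d. nsq (A *\<^sub>v x) \<le> rs!0 * nsq x)
   \<and> (\<forall>x\<in>carrier_vec d. rs!(d-1) * nsq x \<le> nsq (A *\<^sub>v x))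
   \<and> (\<exists>u\<in>carrier_vec d. u \<noteq> 0\<^sub>v d \<and> nsq (A *\<^sub>v u) = rs!0 * nsq u \<and>
        (\<forall>x\<in>carrier_vec d. x \<bullet>c u = 0 \<longrightarrow> nsq (A *\<^sub>v x) \<le> rs!1 * nsq x))
   \<and> (\<forall>v\<in>carrier_vec d. \<exists>x\<in>carrier_vec d. x \<noteq> 0\<^sub>v d \<and> x \<bullet>c v = 0 \<and> rs!1 * nsq x \<le> nsq (A *\<^sub>v x))
   \<and> (\<exists>z\<in>carrier_vec d. z \<noteq> 0\<^sub>v d \<and> nsq (A *\<^sub>v z) = rs!(d-1) * nsq z)"
proof -
  from sv_struct[OF A] obtain U rs where U: "U \<in> carrier_mat d d" and UU: "mat_adjoint U * U = 1\<^sub>m d"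
    and UU': "U * mat_adjoint U = 1\<^sub>m d" and lrs: "length rs = d" and srt: "sorted (rev rs)"
    and nn: "\<forall>r\<in>set rs. r \<ge> 0" and D: "mat_adjoint U * (mat_adjoint A * A) * U = diagm (map of_real rs)"
    and sv: "sv_list_complex A = map sqrt rs" by blast
  note R = rayleigh[OF A U UU UU' D lrs]
  have aU: "mat_adjoint U \<in> carrier_mat d d" using U by auto
  have mono: "i \<le> j \<Longrightarrow> j < d \<Longrightarrow> rs ! j \<le> rs ! i" for i j
    using sorted_rev_nth_mono[OF srt] lrs by auto
  define c where "c = (\<lambda>x i. (cmod ((mat_adjoint U *\<^sub>v x) $ i))\<^sup>2)"
  have c0: "c x i \<ge> 0" for x i unfolding c_def by simp
  have inv: "mat_adjoint U *\<^sub>v (U *\<^sub>v y) = y" if y: "y \<in> carrier_vec d" for y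
    using assoc_mult_mat_vec[OF aU U y, symmetric] UU y by simp
  have P1: "nsq (A *\<^sub>v x) \<le> rs!0 * nsq x" if x: "x \<in> carrier_vec d" for x
  proof -
    have "nsq (A *\<^sub>v x) = (\<Sum>i<d. rs ! i * c x i)" using R(1)[OF x] unfolding c_def .
    also have "\<dots> \<le> (\<Sum>i<d. rs ! 0 * c x i)"
      by (rule sum_mono, rule mult_right_mono[OF mono c0], auto)
    also have "\<dots> = rs ! 0 * nsq x" using R(2)[OF x] unfolding c_def by (simp add: sum_distrib_left)
    finally show ?thesis .
  qed
  have P2: "rs!(d-1) * nsq x \<le> nsq (A *\<^sub>v x)" if x: "x \<in> carrier_vec d" for x
  proof -
    have "rs!(d-1) * nsq x = (\<Sum>i<d. rs ! (d-1) * c x i)" using R(2)[OF x] unfolding c_def by (simp add: sum_distrib_left)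
    also have "\<dots> \<le> (\<Sum>i<d. rs ! i * c x i)"
      by (rule sum_mono, rule mult_right_mono[OF mono c0], insert d2, auto)
    also have "\<dots> = nsq (A *\<^sub>v x)" using R(1)[OF x] unfolding c_def ..
    finally show ?thesis .
  qed
  define e0 where "e0 = (unit_vec d 0 :: complex vec)"
  define e1 where "e1 = (unit_vec d 1 :: complex vec)"
  have e0: "e0 \<in> carrier_vec d" and e1: "e1 \<in> carrier_vec d" unfolding e0_def e1_def by auto
  define u where "u = U *\<^sub>v e0"
  have u: "u \<in> carrier_vec d" unfolding u_def using U e0 by auto
  have cu: "c u i = (if i = 0 then 1 else 0)" if "i < d" for i
    unfolding c_def u_def inv[OF e0] using that d2 by (simp add: e0_def)
  have nsqu: "nsq u = 1"
  proof -
    have "nsq u = (\<Sum>i<d. c u i)" using R(2)[OF u] unfolding c_def .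
    also have "\<dots> = (\<Sum>i<d. if i = 0 then 1 else 0)" by (rule sum.cong, auto simp: cu)
    also have "\<dots> = 1" using d2 by simp
    finally show ?thesis .
  qed
  have Au: "nsq (A *\<^sub>v u) = rs!0 * nsq u"
  proof -
    have "nsq (A *\<^sub>v u) = (\<Sum>i<d. rs ! i * c u i)" using R(1)[OF u] unfolding c_def .
    also have "\<dots> = (\<Sum>i<d. if i = 0 then rs ! 0 else 0)" by (rule sum.cong, auto simp: cu)
    also have "\<dots> = rs ! 0" using d2 by simp
    finally show ?thesis using nsqu by simp
  qed
  have u0: "u \<noteq> 0\<^sub>v d" using nsqu nsq_zero_vec[of d] by auto
  have P6: "\<exists>z\<in>carrier_vec d. z \<noteq> 0\<^sub>v d \<and> nsq (A *\<^sub>v z) = rs!(d-1) * nsq z"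
  proof -
    define k where "k = d - 1"
    have k: "k < d" unfolding k_def using d2 by auto
    define ek where "ek = (unit_vec d k :: complex vec)"
    have ek: "ek \<in> carrier_vec d" unfolding ek_def by auto
    define z where "z = U *\<^sub>v ek"
    have z: "z \<in> carrier_vec d" unfolding z_def using U ek by auto
    have cz: "c z i = (if i = k then 1 else 0)" if "i < d" for i
      unfolding c_def z_def inv[OF ek] using that k by (simp add: ek_def)
    have nsqz: "nsq z = 1"
    proof -
      have "nsq z = (\<Sum>i<d. c z i)" using R(2)[OF z] unfolding c_def .
      also have "\<dots> = (\<Sum>i<d. if i = k then 1 else 0)" by (rule sum.cong, auto simp: cz)
      also have "\<dots> = 1" using k by simp
      finally show ?thesis .
    qed
    have Az: "nsq (A *\<^sub>v z) = rs!k * nsq z"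
    proof -
      have "nsq (A *\<^sub>v z) = (\<Sum>i<d. rs ! i * c z i)" using R(1)[OF z] unfolding c_def .
      also have "\<dots> = (\<Sum>i<d. if i = k then rs ! k else 0)" by (rule sum.cong, auto simp: cz)
      also have "\<dots> = rs ! k" using k by simp
      finally show ?thesis using nsqz by simp
    qed
    have "z \<noteq> 0\<^sub>v d" using nsqz nsq_zero_vec[of d] by auto
    thus ?thesis using z Az unfolding k_def by blast
  qed
  have P3: "nsq (A *\<^sub>v x) \<le> rs!1 * nsq x" if x: "x \<in> carrier_vec d" and xu: "x \<bullet>c u = 0" for x
  proof -
    have "x \<bullet>c u = (mat_adjoint U *\<^sub>v x) \<bullet>c e0" unfolding u_def by (rule adj_inner2[OF U x e0])
    also have "\<dots> = (mat_adjoint U *\<^sub>v x) $ 0" unfolding e0_def conj_unit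
      using aU x d2 by (subst scalar_prod_right_unit, auto)
    finally have z: "c x 0 = 0" using xu unfolding c_def by simp
    have "nsq (A *\<^sub>v x) = (\<Sum>i<d. rs ! i * c x i)" using R(1)[OF x] unfolding c_def .
    also have "\<dots> \<le> (\<Sum>i<d. rs ! 1 * c x i)"
    proof (rule sum_mono)
      fix i assume i: "i \<in> {..<d}"
      show "rs ! i * c x i \<le> rs ! 1 * c x i"
      proof (cases "i = 0")
        case True thus ?thesis using z by simp
      next
        case False thus ?thesis using i by (intro mult_right_mono[OF mono c0], auto)
      qed
    qed
    also have "\<dots> = rs ! 1 * nsq x" using R(2)[OF x] unfolding c_def by (simp add: sum_distrib_left)
    finally show ?thesis .
  qed
  have P5: "\<exists>x\<in>carrier_vec d. x \<noteq> 0\<^sub>v d \<and> x \<bullet>c v = 0 \<and> rs!1 * nsq x \<le> nsq (A *\<^sub>v x)"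
    if v: "v \<in> carrier_vec d" for v
  proof -
    define w where "w = mat_adjoint U *\<^sub>v v"
    have w: "w \<in> carrier_vec d" unfolding w_def using aU v by auto
    define a where "a = (if w $ 0 = 0 \<and> w $ 1 = 0 then 1 else cnj (w $ 1))"
    define b where "b = (if w $ 0 = 0 \<and> w $ 1 = 0 then 0 else - cnj (w $ 0))"
    have ab0: "a * cnj (w $ 0) + b * cnj (w $ 1) = 0" unfolding a_def b_def by auto
    have abnz: "a \<noteq> 0 \<or> b \<noteq> 0" unfolding a_def b_def by auto
    define y where "y = a \<cdot>\<^sub>v e0 + b \<cdot>\<^sub>v e1"
    have y: "y \<in> carrier_vec d" unfolding y_def using e0 e1 by auto
    have yi: "y $ i = (if i = 0 then a else if i = 1 then b else 0)" if "i < d" for i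
      unfolding y_def e0_def e1_def using that by (auto simp: unit_vec_def)
    have y0: "y \<noteq> 0\<^sub>v d"
    proof
      assume "y = 0\<^sub>v d"
      hence "y $ 0 = 0" "y $ 1 = 0" using d2 by auto
      thus False using yi[of 0] yi[of 1] d2 abnz by auto
    qed
    define x where "x = U *\<^sub>v y"
    have x: "x \<in> carrier_vec d" unfolding x_def using U y by auto
    have cx: "c x i = (cmod (y $ i))\<^sup>2" for i unfolding c_def x_def inv[OF y] ..
    have "x \<bullet>c v = y \<bullet>c w" unfolding x_def w_def by (rule adj_inner[OF U y v])
    also have "\<dots> = a * (e0 \<bullet>c w) + b * (e1 \<bullet>c w)" unfolding y_def
      using e0 e1 w by (simp add: add_scalar_prod_distrib[of _ d] smult_scalar_prod_distrib[of _ d])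
    also have "\<dots> = a * cnj (w $ 0) + b * cnj (w $ 1)" unfolding e0_def e1_def
      using w d2 by (simp add: scalar_prod_left_unit)
    finally have xv: "x \<bullet>c v = 0" using ab0 by simp
    have "nsq x = (\<Sum>i<d. c x i)" using R(2)[OF x] unfolding c_def .
    also have "\<dots> = nsq y" unfolding cx using y by (simp add: nsq_def)
    finally have "nsq x = nsq y" .
    hence "nsq x > 0" using nsq_pos[OF y y0] by simp
    hence x0: "x \<noteq> 0\<^sub>v d" using nsq_zero_vec[of d] by auto
    have "rs!1 * nsq x = (\<Sum>i<d. rs ! 1 * c x i)" using R(2)[OF x] unfolding c_def by (simp add: sum_distrib_left)
    also have "\<dots> \<le> (\<Sum>i<d. rs ! i * c x i)"
    proof (rule sum_mono)
      fix i assume i: "i \<in> {..<d}"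
      show "rs ! 1 * c x i \<le> rs ! i * c x i"
      proof (cases "i \<le> 1")
        case True thus ?thesis using i d2 by (intro mult_right_mono[OF mono c0], auto)
      next
        case False thus ?thesis using i yi[of i] unfolding cx by auto
      qed
    qed
    also have "\<dots> = nsq (A *\<^sub>v x)" using R(1)[OF x] unfolding c_def ..
    finally show ?thesis using x x0 xv by blast
  qed
  show ?thesis
    by (intro exI[of _ rs] conjI lrs srt nn sv ballI P1 P2 P5 P6 bexI[of _ u] u u0 Au impI P3; assumption?)
qed

lemma final_ineq:
  fixes P Q R S T C0 C1 :: real
  assumes "0 < P" "0 < Q" "0 < R" "0 < S" "0 < T" "T \<le> S" "P * T \<le> C0" "0 < C1" "C1 \<le> Q * R"
  shows "T\<^sup>2 / R\<^sup>2 * (P / Q) * (R / S) \<le> C0 / C1"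
proof -
  have "T\<^sup>2 / R\<^sup>2 * (P / Q) * (R / S) = (P * T) / (Q * R) * (T / S)"
    using assms by (simp add: field_simps power2_eq_square)
  also have "\<dots> \<le> (P * T) / (Q * R)"
    using assms by (intro mult_left_le, auto)
  also have "\<dots> \<le> C0 / C1"
  proof -
    have "0 < P * T" using assms by simp
    hence "0 \<le> C0" using assms by linarith
    thus ?thesis using assms by (intro frac_le, auto)
  qed
  finally show ?thesis .
qed

lemma final_ineq2:
  fixes P Q R S T C0 C1 :: real
  assumes "0 < P" "0 < Q" "0 < R" "0 < S" "0 < T" "T \<le> S" "P * T \<le> C0" "0 < C1" "C1 \<le> Q * R"
  shows "T\<^sup>2 / R\<^sup>2 * (R / S) * (P / Q) \<le> C0 / C1"
proof -
  have "T\<^sup>2 / R\<^sup>2 * (R / S) * (P / Q) = T\<^sup>2 / R\<^sup>2 * ((P / Q) * (R / S))"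
    unfolding mult.assoc by (subst mult.commute[of "R/S" "P/Q"], rule refl)
  thus ?thesis using final_ineq[OF assms] by (simp only: mult.assoc)
qed

lemma inj_inv: fixes A :: "complex mat"
  assumes A: "A \<in> carrier_mat d d" and inv: "invertible_mat A"
  shows "\<exists>B \<in> carrier_mat d d. A * B = 1\<^sub>m d \<and> B * A = 1\<^sub>m d"
proof -
  from inv obtain B where AB: "inverts_mat A B" and BA: "inverts_mat B A"
    unfolding invertible_mat_def by auto
  have c1: "dim_col B = d" using arg_cong[OF AB[unfolded inverts_mat_def], of dim_col] A by simp
  have c2: "dim_row B = d" using arg_cong[OF BA[unfolded inverts_mat_def], of dim_col] A by simp
  have B: "B \<in> carrier_mat d d" using c1 c2 unfolding carrier_mat_def by simp
  show ?thesis using AB BA A B unfolding inverts_mat_def by auto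
qed

lemma inj_vec: fixes A B :: "complex mat"
  assumes A: "A \<in> carrier_mat d d" and B: "B \<in> carrier_mat d d" and BA: "B * A = 1\<^sub>m d"
    and z: "z \<in> carrier_vec d" and z0: "z \<noteq> 0\<^sub>v d"
  shows "A *\<^sub>v z \<noteq> 0\<^sub>v d"
proof
  assume "A *\<^sub>v z = 0\<^sub>v d"
  hence "B *\<^sub>v (A *\<^sub>v z) = 0\<^sub>v d" using B by (intro eq_vecI, auto simp: scalar_prod_def)
  also have "B *\<^sub>v (A *\<^sub>v z) = z" using assoc_mult_mat_vec[OF B A z, symmetric] BA z by simp
  finally show False using z0 by simp
qed

lemma main_complex:
  fixes w1 w2 :: "complex mat"
  assumes d2: "d \<ge> 2" and w1: "w1 \<in> carrier_mat d d" and w2: "w2 \<in> carrier_mat d d"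
    and i1: "invertible_mat w1" and i2: "invertible_mat w2"
  shows "sv_complex (w1 * w2) 1 / sv_complex (w1 * w2) 2 \<ge>
           (sv_complex w1 d)\<^sup>2 / (sv_complex w1 1)\<^sup>2 *
           (sv_complex w1 1 / sv_complex w1 2) * (sv_complex w2 1 / sv_complex w2 2)"
    and "sv_complex (w1 * w2) 1 / sv_complex (w1 * w2) 2 \<ge>
           (sv_complex w2 d)\<^sup>2 / (sv_complex w2 1)\<^sup>2 *
           (sv_complex w1 1 / sv_complex w1 2) * (sv_complex w2 1 / sv_complex w2 2)"
proof -
  define p where "p = w1 * w2"
  have p: "p \<in> carrier_mat d d" unfolding p_def using w1 w2 by auto
  from inj_inv[OF w1 i1] obtain B1 where B1: "B1 \<in> carrier_mat d d" and B1a: "w1 * B1 = 1\<^sub>m d" and B1b: "B1 * w1 = 1\<^sub>m d" by auto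
  from inj_inv[OF w2 i2] obtain B2 where B2: "B2 \<in> carrier_mat d d" and B2a: "w2 * B2 = 1\<^sub>m d" and B2b: "B2 * w2 = 1\<^sub>m d" by auto
  have pv: "p *\<^sub>v x = w1 *\<^sub>v (w2 *\<^sub>v x)" if "x \<in> carrier_vec d" for x
    unfolding p_def using assoc_mult_mat_vec[OF w1 w2 that] .
  have nz1: "z \<in> carrier_vec d \<Longrightarrow> z \<noteq> 0\<^sub>v d \<Longrightarrow> w1 *\<^sub>v z \<noteq> 0\<^sub>v d" for z by (rule inj_vec[OF w1 B1 B1b])
  have nz2: "z \<in> carrier_vec d \<Longrightarrow> z \<noteq> 0\<^sub>v d \<Longrightarrow> w2 *\<^sub>v z \<noteq> 0\<^sub>v d" for z by (rule inj_vec[OF w2 B2 B2b])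
  have nzp: "z \<in> carrier_vec d \<Longrightarrow> z \<noteq> 0\<^sub>v d \<Longrightarrow> p *\<^sub>v z \<noteq> 0\<^sub>v d" for z
    using nz1[of "w2 *\<^sub>v z"] nz2[of z] pv[of z] w2 by auto
  have pos_last: "rs ! (d-1) > 0" 
    if M: "M \<in> carrier_mat d d" and nz: "\<And>z. z \<in> carrier_vec d \<Longrightarrow> z \<noteq> 0\<^sub>v d \<Longrightarrow> M *\<^sub>v z \<noteq> 0\<^sub>v d"
    and ex: "\<exists>z\<in>carrier_vec d. z \<noteq> 0\<^sub>v d \<and> nsq (M *\<^sub>v z) = rs!(d-1) * nsq z" for M rs
  proof -
    from ex obtain z where z: "z \<in> carrier_vec d" "z \<noteq> 0\<^sub>v d" and e: "nsq (M *\<^sub>v z) = rs!(d-1) * nsq z" by auto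
    have "M *\<^sub>v z \<in> carrier_vec d" using M z(1) by auto
    hence "nsq (M *\<^sub>v z) > 0" using nsq_pos[of "M *\<^sub>v z" d] nz[OF z] by auto
    moreover have "nsq z > 0" using nsq_pos[OF z] .
    ultimately show ?thesis using e by (simp add: zero_less_mult_iff)
  qed
  from sv_facts[OF w1 d2] obtain a where la: "length a = d" and sa: "sorted (rev a)"
    and sva: "sv_list_complex w1 = map sqrt a"
    and a1: "\<forall>x\<in>carrier_vec d. nsq (w1 *\<^sub>v x) \<le> a!0 * nsq x"
    and a2: "\<forall>x\<in>carrier_vec d. a!(d-1) * nsq x \<le> nsq (w1 *\<^sub>v x)"
    and a3: "\<exists>u\<in>carrier_vec d. u \<noteq> 0\<^sub>v d \<and> nsq (w1 *\<^sub>v u) = a!0 * nsq u \<and>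
        (\<forall>x\<in>carrier_vec d. x \<bullet>c u = 0 \<longrightarrow> nsq (w1 *\<^sub>v x) \<le> a!1 * nsq x)"
    and a6: "\<exists>z\<in>carrier_vec d. z \<noteq> 0\<^sub>v d \<and> nsq (w1 *\<^sub>v z) = a!(d-1) * nsq z"
    by blast
  from sv_facts[OF w2 d2] obtain b where lb: "length b = d" and sb: "sorted (rev b)"
    and svb: "sv_list_complex w2 = map sqrt b"
    and b1: "\<forall>x\<in>carrier_vec d. nsq (w2 *\<^sub>v x) \<le> b!0 * nsq x"
    and b2: "\<forall>x\<in>carrier_vec d. b!(d-1) * nsq x \<le> nsq (w2 *\<^sub>v x)"
    and b3: "\<exists>u\<in>carrier_vec d. u \<noteq> 0\<^sub>v d \<and> nsq (w2 *\<^sub>v u) = b!0 * nsq u \<and>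
        (\<forall>x\<in>carrier_vec d. x \<bullet>c u = 0 \<longrightarrow> nsq (w2 *\<^sub>v x) \<le> b!1 * nsq x)"
    and b6: "\<exists>z\<in>carrier_vec d. z \<noteq> 0\<^sub>v d \<and> nsq (w2 *\<^sub>v z) = b!(d-1) * nsq z"
    by blast
  from sv_facts[OF p d2] obtain c where lc: "length c = d" and sc: "sorted (rev c)"
    and svc: "sv_list_complex p = map sqrt c"
    and c1: "\<forall>x\<in>carrier_vec d. nsq (p *\<^sub>v x) \<le> c!0 * nsq x"
    and c5: "\<forall>v\<in>carrier_vec d. \<exists>x\<in>carrier_vec d. x \<noteq> 0\<^sub>v d \<and> x \<bullet>c v = 0 \<and> c!1 * nsq x \<le> nsq (p *\<^sub>v x)"
    and c6: "\<exists>z\<in>carrier_vec d. z \<noteq> 0\<^sub>v d \<and> nsq (p *\<^sub>v z) = c!(d-1) * nsq z"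
    by blast
  have apos: "a!(d-1) > 0" by (rule pos_last[OF w1 nz1 a6])
  have bpos: "b!(d-1) > 0" by (rule pos_last[OF w2 nz2 b6])
  have cpos: "c!(d-1) > 0" by (rule pos_last[OF p nzp c6])
  have mono: "sorted (rev xs) \<Longrightarrow> length xs = d \<Longrightarrow> i \<le> j \<Longrightarrow> j < d \<Longrightarrow> xs ! j \<le> xs ! i" for xs :: "real list" and i j
    using sorted_rev_nth_mono[of xs i j] by auto
  have am: "a!(d-1) \<le> a!1" "a!1 \<le> a!0" using mono[OF sa la] d2 by auto
  have bm: "b!(d-1) \<le> b!1" "b!1 \<le> b!0" using mono[OF sb lb] d2 by auto
  have cm: "c!(d-1) \<le> c!1" using mono[OF sc lc] d2 by auto
  from a3 obtain u1 where u1: "u1 \<in> carrier_vec d" "u1 \<noteq> 0\<^sub>v d" and u1e: "nsq (w1 *\<^sub>v u1) = a!0 * nsq u1"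
    and u1p: "\<And>x. x\<in>carrier_vec d \<Longrightarrow> x \<bullet>c u1 = 0 \<Longrightarrow> nsq (w1 *\<^sub>v x) \<le> a!1 * nsq x" by auto
  from b3 obtain u2 where u2: "u2 \<in> carrier_vec d" "u2 \<noteq> 0\<^sub>v d" and u2e: "nsq (w2 *\<^sub>v u2) = b!0 * nsq u2"
    and u2p: "\<And>x. x\<in>carrier_vec d \<Longrightarrow> x \<bullet>c u2 = 0 \<Longrightarrow> nsq (w2 *\<^sub>v x) \<le> b!1 * nsq x" by auto
  have K1: "a!0 * b!(d-1) \<le> c!0"
  proof -
    define x where "x = B2 *\<^sub>v u1"
    have x: "x \<in> carrier_vec d" unfolding x_def using B2 u1 by auto
    have wx: "w2 *\<^sub>v x = u1" unfolding x_def using assoc_mult_mat_vec[OF w2 B2 u1(1), symmetric] B2a u1 by simp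
    have x0: "x \<noteq> 0\<^sub>v d" using wx u1 w2 by auto
    have nx: "nsq x > 0" using nsq_pos[OF x x0] .
    have "a!0 * b!(d-1) * nsq x \<le> a!0 * nsq (w2 *\<^sub>v x)"
      using b2 x mult_left_mono[of "b!(d-1) * nsq x" "nsq (w2 *\<^sub>v x)" "a!0"] am apos
      by (simp add: mult.assoc)
    also have "\<dots> = nsq (p *\<^sub>v x)" unfolding pv[OF x] wx u1e ..
    also have "\<dots> \<le> c!0 * nsq x" using c1 x by auto
    finally show ?thesis using nx by simp
  qed
  have K1': "a!(d-1) * b!0 \<le> c!0"
  proof -
    have nx: "nsq u2 > 0" using nsq_pos[OF u2] .
    have w2u: "w2 *\<^sub>v u2 \<in> carrier_vec d" using w2 u2 by auto
    have "a!(d-1) * b!0 * nsq u2 = a!(d-1) * nsq (w2 *\<^sub>v u2)" unfolding u2e by (simp add: mult.assoc)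
    also have "\<dots> \<le> nsq (p *\<^sub>v u2)" unfolding pv[OF u2(1)] using a2 w2u by auto
    also have "\<dots> \<le> c!0 * nsq u2" using c1 u2 by auto
    finally show ?thesis using nx by simp
  qed
  have K2: "c!1 \<le> a!0 * b!1"
  proof -
    from c5 u2 obtain x where x: "x \<in> carrier_vec d" "x \<noteq> 0\<^sub>v d" and xu: "x \<bullet>c u2 = 0"
      and cx: "c!1 * nsq x \<le> nsq (p *\<^sub>v x)" by blast
    have nx: "nsq x > 0" using nsq_pos[OF x] .
    have w2x: "w2 *\<^sub>v x \<in> carrier_vec d" using w2 x by auto
    have "c!1 * nsq x \<le> nsq (w1 *\<^sub>v (w2 *\<^sub>v x))" using cx pv[OF x(1)] by simp
    also have "\<dots> \<le> a!0 * nsq (w2 *\<^sub>v x)" using a1 w2x by auto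
    also have "\<dots> \<le> a!0 * (b!1 * nsq x)" using u2p[OF x(1) xu] am apos by (intro mult_left_mono, auto)
    finally show ?thesis using nx by (simp add: mult.assoc)
  qed
  have K2': "c!1 \<le> a!1 * b!0"
  proof -
    define v where "v = mat_adjoint w2 *\<^sub>v u1"
    have v: "v \<in> carrier_vec d" unfolding v_def using w2 u1 unfolding carrier_vec_def carrier_mat_def by simp
    from c5 v obtain x where x: "x \<in> carrier_vec d" "x \<noteq> 0\<^sub>v d" and xv: "x \<bullet>c v = 0"
      and cx: "c!1 * nsq x \<le> nsq (p *\<^sub>v x)" by blast
    have nx: "nsq x > 0" using nsq_pos[OF x] .
    have w2x: "w2 *\<^sub>v x \<in> carrier_vec d" using w2 x by auto
    have orth: "(w2 *\<^sub>v x) \<bullet>c u1 = 0" using adj_inner[OF w2 x(1) u1(1)] xv unfolding v_def by simp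
    have "c!1 * nsq x \<le> nsq (w1 *\<^sub>v (w2 *\<^sub>v x))" using cx pv[OF x(1)] by simp
    also have "\<dots> \<le> a!1 * nsq (w2 *\<^sub>v x)" using u1p[OF w2x orth] .
    also have "\<dots> \<le> a!1 * (b!0 * nsq x)" using b1 x am apos by (intro mult_left_mono, auto)
    finally show ?thesis using nx by (simp add: mult.assoc)
  qed
  have sva': "sv_complex w1 k = sqrt (a!(k-1))" if "1 \<le> k" "k \<le> d" for k
    unfolding sv_complex_def sva using that la by auto
  have svb': "sv_complex w2 k = sqrt (b!(k-1))" if "1 \<le> k" "k \<le> d" for k
    unfolding sv_complex_def svb using that lb by auto
  have svc': "sv_complex p k = sqrt (c!(k-1))" if "1 \<le> k" "k \<le> d" for k
    unfolding sv_complex_def svc using that lc by auto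
  have sq: "sqrt x * sqrt y \<le> sqrt z" if "x * y \<le> z" for x y z :: real
    using that by (simp add: real_sqrt_mult[symmetric])
  have sq': "sqrt z \<le> sqrt x * sqrt y" if "z \<le> x * y" for x y z :: real
    using that by (simp add: real_sqrt_mult[symmetric])
  have pa: "0 < a!0" "0 < a!1" using apos am by auto
  have pb: "0 < b!0" "0 < b!1" using bpos bm by auto
  have pc: "0 < c!1" using cpos cm by auto
  have s: "sv_complex w1 1 = sqrt (a!0)" "sv_complex w1 2 = sqrt (a!1)" "sv_complex w1 d = sqrt (a!(d-1))"
    "sv_complex w2 1 = sqrt (b!0)" "sv_complex w2 2 = sqrt (b!1)" "sv_complex w2 d = sqrt (b!(d-1))"
    "sv_complex p 1 = sqrt (c!0)" "sv_complex p 2 = sqrt (c!1)"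
    using sva' svb' svc' d2 by auto
  have K1s: "sqrt (b!0) * sqrt (a!(d-1)) \<le> sqrt (c!0)" using sq[OF K1'] mult.commute[of "sqrt (b!0)" "sqrt (a!(d-1))"] by linarith
  have K2s: "sqrt (c!1) \<le> sqrt (b!1) * sqrt (a!0)" using sq'[OF K2] mult.commute[of "sqrt (b!1)" "sqrt (a!0)"] by linarith
  have K1t: "sqrt (a!0) * sqrt (b!(d-1)) \<le> sqrt (c!0)" using sq[OF K1] .
  have K2t: "sqrt (c!1) \<le> sqrt (a!1) * sqrt (b!0)" using sq'[OF K2'] .
  have T1: "sqrt (a!(d-1)) \<le> sqrt (a!1)" "sqrt (b!(d-1)) \<le> sqrt (b!1)" using am bm by (auto intro: real_sqrt_le_mono)
  show "sv_complex (w1 * w2) 1 / sv_complex (w1 * w2) 2 \<ge>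
           (sv_complex w1 d)\<^sup>2 / (sv_complex w1 1)\<^sup>2 *
           (sv_complex w1 1 / sv_complex w1 2) * (sv_complex w2 1 / sv_complex w2 2)"
    unfolding p_def[symmetric] s
    by (rule final_ineq2[OF _ _ _ _ _ T1(1) K1s _ K2s]; use pa pb pc apos in simp)
  show "sv_complex (w1 * w2) 1 / sv_complex (w1 * w2) 2 \<ge>
           (sv_complex w2 d)\<^sup>2 / (sv_complex w2 1)\<^sup>2 *
           (sv_complex w1 1 / sv_complex w1 2) * (sv_complex w2 1 / sv_complex w2 2)"
    unfolding p_def[symmetric] s
    by (rule final_ineq[OF _ _ _ _ _ T1(2) K1t _ K2t]; use pa pb pc bpos in simp)
qed

lemma sv_list_real_complex:
  fixes A :: "real mat" assumes A: "A \<in> carrier_mat d d"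
  shows "sv_list_real A = sv_list_complex (map_mat complex_of_real A)"
proof -
  interpret pr: map_poly_inj_comm_ring_hom "of_real :: real \<Rightarrow> complex" ..
  define cA where "cA = map_mat complex_of_real A"
  have cA: "cA \<in> carrier_mat d d" unfolding cA_def using A by auto
  have adjc: "mat_adjoint cA = map_mat complex_of_real (mat_adjoint A)"
    by (rule eq_matI, insert A, auto simp: cA_def)
  have HH: "mat_adjoint cA * cA = map_mat complex_of_real (mat_adjoint A * A)"
    unfolding adjc unfolding cA_def by (rule of_real_hom.mat_hom_mult[symmetric], insert A, auto)
  from sv_struct[OF cA] obtain rs where srt: "sorted (rev rs)"
    and cp: "char_poly (mat_adjoint cA * cA) = (\<Prod>e\<leftarrow>map of_real rs. [:-e,1:])"
    and sv: "sv_list_complex cA = map sqrt rs" by blast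
  have AA: "mat_adjoint A * A \<in> carrier_mat d d" using A by auto
  have "map_poly complex_of_real (char_poly (mat_adjoint A * A)) = (\<Prod>e\<leftarrow>map of_real rs. [:-e,1:])"
    using cp unfolding HH of_real_hom.char_poly_hom[OF AA] .
  also have "\<dots> = map_poly complex_of_real (\<Prod>r\<leftarrow>rs. [:-r,1:])"
    unfolding pr.hom_prod_list by (simp add: o_def)
  finally have cpr: "char_poly (mat_adjoint A * A) = (\<Prod>r\<leftarrow>rs. [:-r,1:])" by (rule pr.injectivity)
  have "sort (map sqrt rs) = rev (map sqrt rs)"
  proof (rule properties_for_sort)
    show "sorted (rev (map sqrt rs))" using srt unfolding rev_map sorted_map
      by (rule sorted_wrt_mono_rel[rotated], auto)
  qed simp
  hence "sv_list_real A = map sqrt rs"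
    unfolding sv_list_real_def cpr proots_linprod
    by (metis mset_map sorted_list_of_multiset_mset rev_rev_ident)
  thus ?thesis using sv unfolding cA_def by simp
qed

lemma sv_real_complex:
  fixes A :: "real mat" assumes A: "A \<in> carrier_mat d d"
  shows "sv_real A k = sv_complex (map_mat complex_of_real A) k"
  unfolding sv_real_def sv_complex_def sv_list_real_complex[OF A] ..

lemma invertible_real_complex:
  fixes A :: "real mat" assumes A: "A \<in> carrier_mat d d" and inv: "invertible_mat A"
  shows "invertible_mat (map_mat complex_of_real A)"
proof -
  from inv obtain B where AB: "inverts_mat A B" and BA: "inverts_mat B A"
    unfolding invertible_mat_def by auto
  have c1: "dim_col B = d" using arg_cong[OF AB[unfolded inverts_mat_def], of dim_col] A by simp
  have c2: "dim_row B = d" using arg_cong[OF BA[unfolded inverts_mat_def], of dim_col] A by simp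
  have B: "B \<in> carrier_mat d d" using c1 c2 unfolding carrier_mat_def by simp
  have 1: "map_mat complex_of_real A * map_mat complex_of_real B = 1\<^sub>m d"
    using of_real_hom.mat_hom_mult[OF A B, symmetric] AB A unfolding inverts_mat_def by (simp add: of_real_hom.mat_hom_one)
  have 2: "map_mat complex_of_real B * map_mat complex_of_real A = 1\<^sub>m d"
    using of_real_hom.mat_hom_mult[OF B A, symmetric] BA B unfolding inverts_mat_def by (simp add: of_real_hom.mat_hom_one)
  show ?thesis unfolding invertible_mat_def inverts_mat_def square_mat.simps
    using 1 2 A B by (intro conjI exI[of _ "map_mat complex_of_real B"], auto)
qed

theorem lemma2p4:
  fixes d :: nat
  assumes "d \<ge> 2"
  shows
   "(\<forall>(w1::real mat) w2 i. w1 \<in> carrier_mat d d \<and> w2 \<in> carrier_mat d d \<and>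
        invertible_mat w1 \<and> invertible_mat w2 \<and> i \<in> {1::nat, 2} \<longrightarrow>
        (let w = (if i = 1 then w1 else w2) in
         sv_real (w1 * w2) 1 / sv_real (w1 * w2) 2 \<ge>
           (sv_real w d)\<^sup>2 / (sv_real w 1)\<^sup>2 *
           (sv_real w1 1 / sv_real w1 2) * (sv_real w2 1 / sv_real w2 2)))
  \<and> (\<forall>(w1::complex mat) w2 i. w1 \<in> carrier_mat d d \<and> w2 \<in> carrier_mat d d \<and>
        invertible_mat w1 \<and> invertible_mat w2 \<and> i \<in> {1::nat, 2} \<longrightarrow>
        (let w = (if i = 1 then w1 else w2) in
         sv_complex (w1 * w2) 1 / sv_complex (w1 * w2) 2 \<ge>
           (sv_complex w d)\<^sup>2 / (sv_complex w 1)\<^sup>2 *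
           (sv_complex w1 1 / sv_complex w1 2) * (sv_complex w2 1 / sv_complex w2 2)))"
proof (intro conjI allI impI)
  fix w1 w2 :: "complex mat" and i :: nat
  assume h: "w1 \<in> carrier_mat d d \<and> w2 \<in> carrier_mat d d \<and>
        invertible_mat w1 \<and> invertible_mat w2 \<and> i \<in> {1::nat, 2}"
  show "let w = (if i = 1 then w1 else w2) in
         sv_complex (w1 * w2) 1 / sv_complex (w1 * w2) 2 \<ge>
           (sv_complex w d)\<^sup>2 / (sv_complex w 1)\<^sup>2 *
           (sv_complex w1 1 / sv_complex w1 2) * (sv_complex w2 1 / sv_complex w2 2)"
    using main_complex[OF assms, of w1 w2] h by (auto simp: Let_def)
next
  fix w1 w2 :: "real mat" and i :: nat
  assume h: "w1 \<in> carrier_mat d d \<and> w2 \<in> carrier_mat d d \<and>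
        invertible_mat w1 \<and> invertible_mat w2 \<and> i \<in> {1::nat, 2}"
  hence w1: "w1 \<in> carrier_mat d d" and w2: "w2 \<in> carrier_mat d d" and i1: "invertible_mat w1"
    and i2: "invertible_mat w2" and i: "i \<in> {1,2}" by auto
  define c1 where "c1 = map_mat complex_of_real w1"
  define c2 where "c2 = map_mat complex_of_real w2"
  have c1: "c1 \<in> carrier_mat d d" and c2: "c2 \<in> carrier_mat d d" unfolding c1_def c2_def using w1 w2 by auto
  have ic1: "invertible_mat c1" unfolding c1_def by (rule invertible_real_complex[OF w1 i1])
  have ic2: "invertible_mat c2" unfolding c2_def by (rule invertible_real_complex[OF w2 i2])
  have p: "w1 * w2 \<in> carrier_mat d d" using w1 w2 by auto
  have cp: "map_mat complex_of_real (w1 * w2) = c1 * c2" unfolding c1_def c2_def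
    by (rule of_real_hom.mat_hom_mult[OF w1 w2])
  have s1: "sv_real w1 k = sv_complex c1 k" for k unfolding c1_def by (rule sv_real_complex[OF w1])
  have s2: "sv_real w2 k = sv_complex c2 k" for k unfolding c2_def by (rule sv_real_complex[OF w2])
  have s3: "sv_real (w1 * w2) k = sv_complex (c1 * c2) k" for k unfolding cp[symmetric] by (rule sv_real_complex[OF p])
  note M = main_complex[OF assms c1 c2 ic1 ic2]
  show "let w = (if i = 1 then w1 else w2) in
         sv_real (w1 * w2) 1 / sv_real (w1 * w2) 2 \<ge>
           (sv_real w d)\<^sup>2 / (sv_real w 1)\<^sup>2 *
           (sv_real w1 1 / sv_real w1 2) * (sv_real w2 1 / sv_real w2 2)"
  proof (cases "i = 1")
    case True thus ?thesis using M(1) by (simp add: Let_def s1 s2 s3)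
  next
    case False thus ?thesis using M(2) by (simp add: Let_def s1 s2 s3)
  qed
qed


end
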